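(* Let $\Omega\subset\mathbb{R}^3$ be a bounded domain with $C^2$ boundary, $T>0$, $\alpha\in(0,1)$, and let $\mathbf{w}:\Omega\times[0,T)\to\mathbb{R}^3$ satisfy $\mathbf{w}\in L^3(0,T;B^\alpha_{3,\infty}(\Omega'))$ for every $\Omega'\subset\subset\Omega$ and $$t\mapsto\sup_{h>0}\frac{\|\mathbf{w}(\cdot,t)\cdot\mathbf{n}(m(\cdot))\|_{L^3(\Omega_h)}}{h^\alpha}\in L^3(0,T).$$ Let $0<h<h_0$ and $l=\frac{h}{16}$. Then, with $C$ independent of $l$ and $h$, $$\|\mathbf{w}^l\cdot\nabla\theta_{h,l}\|_{L^3(0,T;L^3(\Omega_h\setminus\Omega_{h-l}))}\le Cl^{-1}\Big(l^\alpha\|\mathbf{w}\|_{L^3(0,T;B^\alpha_{3,\infty}(\Omega^{h/2}))}+h^\alpha\Big).$$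
   Context: $d(x)=\inf_{y\in\partial\Omega}|x-y|$, $\Omega_\varepsilon=\{x\in\Omega:d(x)<\varepsilon\}$, $\Omega^\varepsilon=\Omega\setminus\overline{\Omega_\varepsilon}$. There is $h_0>0$ (depending on $\Omega$) such that $d\in C^1(\overline{\Omega_{h_0}})$ and each $x\in\Omega_{h_0}$ has a unique $m(x)\in\partial\Omega$ with $d(x)=|x-m(x)|$ and $\nabla d(x)=-\mathbf{n}(m(x))$, $\mathbf{n}$ the outward unit normal. Cut-off: $\eta_{h,l}:\mathbb{R}\to\mathbb{R}$ is smooth with $\eta_{h,l}=0$ on $(-\infty,h-l]$, $\eta_{h,l}=1$ on $[h,\infty)$ and $\|\eta_{h,l}'\|_{L^\infty}\le C/l$; $\theta_{h,l}(x)=\eta_{h,l}(d(x))$. Mollification: $\phi\in C_c^\infty(\mathbb{R}^3)$ nonnegative radial, supported in the unit ball, $\int\phi=1$, $\phi^l(x)=l^{-3}\phi(x/l)$, $\mathbf{w}^l(x,t)=\int_{|y|\le l}\phi^l(y)\mathbf{w}(x-y,t)\,dy$ (componentwise, in space only). Besov norm on a domain $D$: $\|f\|_{B^\alpha_{3,\infty}(D)}=\|f\|_{L^3(D)}+\sup_{|y|>0}|y|^{-\alpha}\|f(\cdot)-f(\cdot-y)\|_{L^3(D\cap(D+\{y\}))}$. *)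

theory Defs
  imports "HOL-Analysis.Analysis"
begin

definition C2_on :: "'a::euclidean_space set \<Rightarrow> ('a \<Rightarrow> real) \<Rightarrow> bool" where
  "C2_on S f \<longleftrightarrow> (\<exists>Df :: 'a \<Rightarrow> ('a \<Rightarrow>\<^sub>L real). \<exists>D2f :: 'a \<Rightarrow> ('a \<Rightarrow>\<^sub>L ('a \<Rightarrow>\<^sub>L real)).
      (\<forall>x\<in>S. (f has_derivative blinfun_apply (Df x)) (at x)) \<and>
      (\<forall>x\<in>S. (Df has_derivative blinfun_apply (D2f x)) (at x)) \<and>
      continuous_on S D2f)"

text \<open>Bounded domain in R^3 with C^2 boundary: near every boundary point, after a rigid
  motion, the domain is the region below the graph of a C^2 function of two variables.\<close>
definition C2_domain :: "(real^3) set \<Rightarrow> bool" where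
  "C2_domain \<Omega> \<longleftrightarrow> open \<Omega> \<and> connected \<Omega> \<and> bounded \<Omega> \<and> \<Omega> \<noteq> {} \<and>
     (\<forall>p\<in>frontier \<Omega>. \<exists>r>0. \<exists>Q \<gamma>. orthogonal_transformation (Q :: real^3 \<Rightarrow> real^3) \<and> C2_on UNIV (\<gamma> :: real \<times> real \<Rightarrow> real) \<and>
        (\<forall>x\<in>ball p r. x \<in> \<Omega> \<longleftrightarrow>
            (Q (x - p)) $ 3 < \<gamma> ((Q (x - p)) $ 1, (Q (x - p)) $ 2)))"

definition partial_d :: "'n::finite \<Rightarrow> (real^'n \<Rightarrow> real) \<Rightarrow> real^'n \<Rightarrow> real" where
  "partial_d i f x = deriv (\<lambda>s. f (x + s *\<^sub>R axis i 1)) 0"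

definition smooth_fun :: "(real^'n::finite \<Rightarrow> real) \<Rightarrow> bool" where
  "smooth_fun f \<longleftrightarrow> (\<forall>is :: 'n list. continuous_on UNIV (foldr partial_d is f) \<and>
      (\<forall>i x. (\<lambda>s. foldr partial_d is f (x + s *\<^sub>R axis i 1)) differentiable (at 0)))"

definition smooth_real :: "(real \<Rightarrow> real) \<Rightarrow> bool" where
  "smooth_real f \<longleftrightarrow> (\<forall>k. (deriv ^^ k) f differentiable_on UNIV)"

definition grad :: "('a::real_inner \<Rightarrow> real) \<Rightarrow> 'a \<Rightarrow> 'a" where
  "grad f x = (THE D. GDERIV f x :> D)"

definition dist_bd :: "(real^3) set \<Rightarrow> real^3 \<Rightarrow> real" where
  "dist_bd \<Omega> x = infdist x (frontier \<Omega>)"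

definition layer :: "(real^3) set \<Rightarrow> real \<Rightarrow> (real^3) set" where
  "layer \<Omega> \<epsilon> = {x\<in>\<Omega>. dist_bd \<Omega> x < \<epsilon>}"

definition inner_part :: "(real^3) set \<Rightarrow> real \<Rightarrow> (real^3) set" where
  "inner_part \<Omega> \<epsilon> = \<Omega> - closure (layer \<Omega> \<epsilon>)"

text \<open>A nearest boundary point m(x) (unique for x in the layer of width h0).\<close>
definition nearest_bd :: "(real^3) set \<Rightarrow> real^3 \<Rightarrow> real^3" where
  "nearest_bd \<Omega> x = (SOME y. y \<in> frontier \<Omega> \<and> dist x y = dist_bd \<Omega> x)"

text \<open>Outward unit normal at a boundary point p: the unit vector nu such that, near p,
  points strictly on the inner side of the tangent plane (up to a cone of any opening)
  lie in Omega and points strictly on the outer side do not.\<close>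
definition is_outward_normal :: "(real^3) set \<Rightarrow> real^3 \<Rightarrow> real^3 \<Rightarrow> bool" where
  "is_outward_normal \<Omega> p \<nu> \<longleftrightarrow> norm \<nu> = 1 \<and>
     (\<forall>\<epsilon>>0. \<exists>\<delta>>0. \<forall>x\<in>ball p \<delta>.
        ((x - p) \<bullet> \<nu> < - \<epsilon> * norm (x - p) \<longrightarrow> x \<in> \<Omega>) \<and>
        ((x - p) \<bullet> \<nu> > \<epsilon> * norm (x - p) \<longrightarrow> x \<notin> \<Omega>))"

definition outward_normal :: "(real^3) set \<Rightarrow> real^3 \<Rightarrow> real^3" where
  "outward_normal \<Omega> p = (THE \<nu>. is_outward_normal \<Omega> p \<nu>)"

definition enn_cbrt :: "ennreal \<Rightarrow> ennreal" where
  "enn_cbrt a = (if a = top then top else ennreal (root 3 (enn2real a)))"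

definition L3_norm :: "(real^3) set \<Rightarrow> (real^3 \<Rightarrow> 'b::real_normed_vector) \<Rightarrow> ennreal" where
  "L3_norm D f = enn_cbrt (\<integral>\<^sup>+ x \<in> D. ennreal (norm (f x) ^ 3) \<partial>lborel)"

definition besov_norm :: "real \<Rightarrow> (real^3) set \<Rightarrow> (real^3 \<Rightarrow> real^3) \<Rightarrow> ennreal" where
  "besov_norm \<alpha> D f = L3_norm D f +
     (SUP y \<in> {y. y \<noteq> 0}. ennreal (norm y powr (- \<alpha>)) *
        L3_norm (D \<inter> ((\<lambda>z. z + y) ` D)) (\<lambda>x. f x - f (x - y)))"

text \<open>L^3(0,T;X) norm, given the X-norm of the function at each time.\<close>
definition L3_time :: "real \<Rightarrow> (real \<Rightarrow> ennreal) \<Rightarrow> ennreal" where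
  "L3_time T N = enn_cbrt (\<integral>\<^sup>+ t \<in> {0..<T}. N t ^ 3 \<partial>lborel)"

definition mollifier_scaled :: "(real^3 \<Rightarrow> real) \<Rightarrow> real \<Rightarrow> real^3 \<Rightarrow> real" where
  "mollifier_scaled \<phi> l x = l powr (-3) * \<phi> ((1 / l) *\<^sub>R x)"

definition mollify :: "(real^3 \<Rightarrow> real) \<Rightarrow> real \<Rightarrow> (real^3 \<Rightarrow> real \<Rightarrow> real^3) \<Rightarrow> real^3 \<Rightarrow> real \<Rightarrow> real^3" where
  "mollify \<phi> l w x t = (LINT y : cball 0 l | lborel. mollifier_scaled \<phi> l y *\<^sub>R w (x - y) t)"

end

theory Submission
  imports Defs
begin



lemma enn_cbrt_cube: "enn_cbrt a ^ 3 = a"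
proof (cases "a = top")
  case True then show ?thesis by (simp add: enn_cbrt_def)
next
  case False
  then obtain r where r: "a = ennreal r" "r \<ge> 0" by (cases a) auto
  then show ?thesis using False
    by (simp add: enn_cbrt_def ennreal_power real_root_pow_pos2)
qed

lemma enn_cbrt_le: assumes "a \<le> b ^ 3" shows "enn_cbrt a \<le> b"
proof (cases "b = top")
  case True then show ?thesis by simp
next
  case False
  then obtain r where r: "b = ennreal r" "r \<ge> 0" by (cases b) auto
  then have "a \<le> ennreal (r^3)" using assms by (simp add: ennreal_power)
  then obtain s where s: "a = ennreal s" "s \<ge> 0" "s \<le> r^3"
    by (metis ennreal_cases ennreal_le_iff ennreal_neq_top linorder_not_le top.extremum_unique zero_le_power r(2) ennreal_less_zero_iff)
  have "root 3 s \<le> root 3 (r^3)" using s by (simp add: real_root_le_iff)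
  also have "\<dots> = r" using r by (simp add: real_root_power_cancel)
  finally show ?thesis using s r by (simp add: enn_cbrt_def)
qed

lemma in_by_infdist:
  fixes \<Omega> :: "'a::real_normed_vector set"
  assumes "open \<Omega>" "x \<in> \<Omega>" "dist x z < infdist x (frontier \<Omega>)"
  shows "z \<in> \<Omega>"
proof (rule ccontr)
  assume "z \<notin> \<Omega>"
  have "ball x (infdist x (frontier \<Omega>)) \<inter> frontier \<Omega> \<noteq> {}"
  proof (rule connected_Int_frontier)
    have "x \<in> ball x (infdist x (frontier \<Omega>))" using assms zero_le_dist[of x z] by (simp del: zero_le_dist)
    then show "ball x (infdist x (frontier \<Omega>)) \<inter> \<Omega> \<noteq> {}" using assms by blast
    have "z \<in> ball x (infdist x (frontier \<Omega>))" using assms by simp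
    then show "ball x (infdist x (frontier \<Omega>)) - \<Omega> \<noteq> {}" using \<open>z \<notin> \<Omega>\<close> by blast
  qed simp
  then obtain p where "p \<in> frontier \<Omega>" "dist x p < infdist x (frontier \<Omega>)" by auto
  then show False using infdist_le[of p "frontier \<Omega>" x] by simp
qed

lemma gderiv_unique: "GDERIV f x :> D \<Longrightarrow> GDERIV f x :> D' \<Longrightarrow> D = D'"
  unfolding gderiv_def
proof -
  assume a: "FDERIV f x :> (\<lambda>h. h \<bullet> D)" "FDERIV f x :> (\<lambda>h. h \<bullet> D')"
  have "(\<lambda>h. h \<bullet> D) = (\<lambda>h. h \<bullet> D')" by (rule has_derivative_unique[OF a])
  then have "(D - D') \<bullet> D = (D - D') \<bullet> D'" by metis
  then have "(D - D') \<bullet> (D - D') = 0" by (simp add: inner_diff_right)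
  then show "D = D'" by simp
qed

lemma grad_eq: "GDERIV f x :> D \<Longrightarrow> grad f x = D"
  unfolding grad_def using gderiv_unique by blast



lemma moll_facts:
  fixes \<phi> :: "real^3 \<Rightarrow> real" and l :: real
  assumes l: "l > 0" and cont: "continuous_on UNIV \<phi>" and nn: "\<And>x. \<phi> x \<ge> 0"
    and supp: "\<And>x. norm x > 1 \<Longrightarrow> \<phi> x = 0" and int: "(\<phi> has_integral 1) UNIV"
  shows "mollifier_scaled \<phi> l \<in> borel_measurable borel"
    and "\<And>y. mollifier_scaled \<phi> l y \<ge> 0"
    and "\<And>y. norm y > l \<Longrightarrow> mollifier_scaled \<phi> l y = 0"
    and "(\<integral>\<^sup>+ y. ennreal (indicator (cball 0 l) y * mollifier_scaled \<phi> l y) \<partial>lborel) = 1"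
    and "set_integrable lborel (cball 0 l) (mollifier_scaled \<phi> l)"
    and "(LINT y : cball 0 l | lborel. mollifier_scaled \<phi> l y) = 1"
proof -
  have mphi[measurable]: "\<phi> \<in> borel_measurable borel"
    using cont by (simp add: borel_measurable_continuous_onI)
  show m[measurable]: "mollifier_scaled \<phi> l \<in> borel_measurable borel"
    unfolding mollifier_scaled_def by measurable
  show nnl: "\<And>y. mollifier_scaled \<phi> l y \<ge> 0"
    using nn by (simp add: mollifier_scaled_def)
  show sl: "\<And>y. norm y > l \<Longrightarrow> mollifier_scaled \<phi> l y = 0"
  proof -
    fix y :: "real^3" assume "norm y > l"
    then have "norm ((1/l) *\<^sub>R y) > 1" using l by (simp add: field_simps)
    then show "mollifier_scaled \<phi> l y = 0" using supp by (simp add: mollifier_scaled_def)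
  qed
  have I1: "(\<integral>\<^sup>+ y. ennreal (\<phi> y) \<partial>lborel) = 1"
    using nn_integral_has_integral_lborel[OF mphi nn int] by simp
  have eq: "(lborel :: (real^3) measure) = density (distr lborel borel (\<lambda>x. 0 + l *\<^sub>R x)) (\<lambda>_. \<bar>l\<bar>^DIM(real^3))"
    by (rule lborel_affine) (use l in simp)
  have "(\<integral>\<^sup>+ y. ennreal (mollifier_scaled \<phi> l y) \<partial>lborel)
      = (\<integral>\<^sup>+ y. ennreal (mollifier_scaled \<phi> l y) \<partial>density (distr lborel borel (\<lambda>x. 0 + l *\<^sub>R x)) (\<lambda>_. \<bar>l\<bar>^DIM(real^3)))"
    by (rule arg_cong[OF eq, of "\<lambda>M. integral\<^sup>N M _"])
  also have "\<dots> = (\<integral>\<^sup>+ y. ennreal (\<bar>l\<bar>^3) * ennreal (mollifier_scaled \<phi> l y) \<partial>distr lborel borel (\<lambda>x. 0 + l *\<^sub>R x))"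
    by (subst nn_integral_density) auto
  also have "\<dots> = (\<integral>\<^sup>+ x. ennreal (\<bar>l\<bar>^3) * ennreal (mollifier_scaled \<phi> l (0 + l *\<^sub>R x)) \<partial>lborel)"
    by (subst nn_integral_distr) auto
  also have "\<dots> = (\<integral>\<^sup>+ x. ennreal (\<phi> x) \<partial>lborel)"
  proof (rule nn_integral_cong)
    fix x :: "real^3"
    have "\<bar>l\<bar>^3 * mollifier_scaled \<phi> l (0 + l *\<^sub>R x) = \<phi> x"
      using l by (simp add: mollifier_scaled_def powr_minus powr_realpow field_simps)
    then show "ennreal (\<bar>l\<bar>^3) * ennreal (mollifier_scaled \<phi> l (0 + l *\<^sub>R x)) = ennreal (\<phi> x)"
      by (simp add: ennreal_mult'[symmetric])
  qed
  finally have I2: "(\<integral>\<^sup>+ y. ennreal (mollifier_scaled \<phi> l y) \<partial>lborel) = 1" using I1 by simp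
  have ind: "indicator (cball 0 l) y * mollifier_scaled \<phi> l y = mollifier_scaled \<phi> l y" for y
    using sl[of y] by (cases "norm y \<le> l") (auto simp: indicator_def)
  show I3: "(\<integral>\<^sup>+ y. ennreal (indicator (cball 0 l) y * mollifier_scaled \<phi> l y) \<partial>lborel) = 1"
    using I2 by (simp add: ind)
  have intg: "integrable lborel (\<lambda>y. indicator (cball 0 l) y * mollifier_scaled \<phi> l y)"
  proof (rule integrableI_nonneg)
    show "(\<lambda>y. indicator (cball 0 l) y * mollifier_scaled \<phi> l y) \<in> borel_measurable lborel"
      using m by (intro borel_measurable_times borel_measurable_indicator) auto
  qed (auto simp: I3 nnl)
  then show "set_integrable lborel (cball 0 l) (mollifier_scaled \<phi> l)"
    by (simp add: set_integrable_def)
  have "ennreal (integral\<^sup>L lborel (\<lambda>y. indicator (cball 0 l) y * mollifier_scaled \<phi> l y)) = 1"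
    using nn_integral_eq_integral[OF intg] I3 nnl by simp
  then show "(LINT y : cball 0 l | lborel. mollifier_scaled \<phi> l y) = 1"
    by (simp add: set_lebesgue_integral_def)
qed



lemma cube_tangent: fixes g c :: real assumes "g \<ge> 0" "c \<ge> 0"
  shows "c^3 + 3*c^2*(g - c) \<le> g^3"
proof -
  have "g^3 - (c^3 + 3*c^2*(g - c)) = (g - c)^2 * (g + 2*c)" by (simp add: power2_eq_square power3_eq_cube algebra_simps)
  also have "\<dots> \<ge> 0" using assms by simp
  finally show ?thesis by simp
qed

lemma moll_jensen:
  fixes p :: "real^3 \<Rightarrow> real" and u :: "real^3 \<Rightarrow> real^3" and v :: "real^3" and S :: "(real^3) set"
  assumes pm[measurable]: "p \<in> borel_measurable borel" and pn: "\<And>y. p y \<ge> 0"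
    and Sm[measurable]: "S \<in> sets borel"
    and pi: "set_integrable lborel S p" and p1: "(LINT y : S | lborel. p y) = 1"
    and um[measurable]: "u \<in> borel_measurable borel"
  shows "ennreal (norm ((LINT y : S | lborel. p y *\<^sub>R u y) - v) ^ 3)
         \<le> (\<integral>\<^sup>+ y. ennreal (indicator S y * p y * norm (u y - v) ^ 3) \<partial>lborel)"
proof (cases "(\<integral>\<^sup>+ y. ennreal (indicator S y * p y * norm (u y - v) ^ 3) \<partial>lborel) = \<infinity>")
  case True then show ?thesis by simp
next
  case False
  define f0 where "f0 = (\<lambda>y. indicator S y * p y)"
  define f1 where "f1 = (\<lambda>y. indicator S y * p y * norm (u y - v))"
  define f3 where "f3 = (\<lambda>y. indicator S y * p y * norm (u y - v) ^ 3)"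
  define V where "V = (\<lambda>y. indicator S y *\<^sub>R (p y *\<^sub>R (u y - v)))"
  have [measurable]: "f0 \<in> borel_measurable borel" unfolding f0_def by measurable
  have [measurable]: "f1 \<in> borel_measurable borel" unfolding f1_def by measurable
  have [measurable]: "f3 \<in> borel_measurable borel" unfolding f3_def by measurable
  have [measurable]: "V \<in> borel_measurable borel" unfolding V_def by measurable
  have f0n: "f0 y \<ge> 0" for y using pn by (simp add: f0_def)
  have f1n: "f1 y \<ge> 0" for y using pn by (simp add: f1_def)
  have f3n: "f3 y \<ge> 0" for y using pn by (simp add: f3_def)
  have i3: "integrable lborel f3"
    by (rule integrableI_nonneg) (use False f3n in \<open>auto simp: f3_def top.not_eq_extremum\<close>)
  have i0: "integrable lborel f0"
    using pi by (simp add: set_integrable_def f0_def)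
  have int0: "integral\<^sup>L lborel f0 = 1"
    using p1 by (simp add: set_lebesgue_integral_def f0_def)
  have b1: "norm (f1 y) \<le> norm (f0 y + f3 y)" for y
  proof -
    have "norm (u y - v) \<le> 1 + norm (u y - v)^3"
    proof (cases "norm (u y - v) \<le> 1")
      case True then show ?thesis by (smt (verit) norm_ge_zero zero_le_power)
    next
      case False
      then have "norm (u y - v) ^1 \<le> norm (u y - v)^3" by (intro power_increasing) auto
      then show ?thesis by simp
    qed
    then have "f0 y * norm (u y - v) \<le> f0 y * (1 + norm (u y - v)^3)"
      using f0n[of y] by (rule mult_left_mono)
    then have "f1 y \<le> f0 y + f3 y"
      by (simp add: f0_def f1_def f3_def distrib_left)
    then show ?thesis using f1n[of y] f0n[of y] f3n[of y] by simp
  qed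
  have i1: "integrable lborel f1"
    by (rule Bochner_Integration.integrable_bound[where f="\<lambda>y. f0 y + f3 y"]) (use i0 i3 b1 in auto)
  have iV: "integrable lborel V"
    by (rule Bochner_Integration.integrable_bound[where f=f1]) (use i1 in \<open>auto simp: V_def f1_def pn\<close>)
  have split: "indicator S y *\<^sub>R (p y *\<^sub>R u y) = V y + f0 y *\<^sub>R v" for y
    by (simp add: V_def f0_def algebra_simps)
  have "(LINT y : S | lborel. p y *\<^sub>R u y) = integral\<^sup>L lborel (\<lambda>y. V y + f0 y *\<^sub>R v)"
    unfolding set_lebesgue_integral_def by (rule Bochner_Integration.integral_cong[OF refl split])
  also have "\<dots> = integral\<^sup>L lborel V + integral\<^sup>L lborel f0 *\<^sub>R v"
    using iV i0 by (simp add: Bochner_Integration.integral_add)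
  finally have diff: "(LINT y : S | lborel. p y *\<^sub>R u y) - v = integral\<^sup>L lborel V" using int0 by simp
  define c where "c = integral\<^sup>L lborel f1"
  have c0: "c \<ge> 0" unfolding c_def using f1n by simp
  have nV: "norm (integral\<^sup>L lborel V) \<le> c"
    unfolding c_def
    by (rule order_trans[OF integral_norm_bound]) (simp add: V_def f1_def pn abs_mult)
  have pt: "c^3 * f0 y + 3*c^2 * (f1 y - c * f0 y) \<le> f3 y" for y
  proof -
    have "f0 y * (c^3 + 3*c^2*(norm (u y - v) - c)) \<le> f0 y * norm (u y - v)^3"
      by (rule mult_left_mono[OF cube_tangent[OF norm_ge_zero c0] f0n])
    then show ?thesis by (simp add: f0_def f1_def f3_def algebra_simps)
  qed
  have "integral\<^sup>L lborel (\<lambda>y. c^3 * f0 y + 3*c^2 * (f1 y - c * f0 y)) \<le> integral\<^sup>L lborel f3"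
    by (rule integral_mono) (use i0 i1 i3 pt in auto)
  also have "integral\<^sup>L lborel (\<lambda>y. c^3 * f0 y + 3*c^2 * (f1 y - c * f0 y)) = c^3"
    using i0 i1 int0 by (simp add: c_def)
  finally have c3: "c^3 \<le> integral\<^sup>L lborel f3" by simp
  have "norm ((LINT y : S | lborel. p y *\<^sub>R u y) - v) ^ 3 \<le> c^3"
    using diff nV by (simp add: power_mono)
  also note c3
  finally have "ennreal (norm ((LINT y : S | lborel. p y *\<^sub>R u y) - v) ^ 3) \<le> ennreal (integral\<^sup>L lborel f3)"
    by (rule ennreal_leI)
  also have "\<dots> = (\<integral>\<^sup>+ y. ennreal (f3 y) \<partial>lborel)"
    using nn_integral_eq_integral[OF i3] f3n by simp
  finally show ?thesis by (simp add: f3_def)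
qed


lemma ennreal_div_mult_ge: assumes "r > 0" shows "a \<le> (a / ennreal r) * ennreal r"
proof (cases a)
  case (real q)
  then show ?thesis using assms by (simp add: divide_ennreal ennreal_mult'[symmetric])
next
  case top
  then show ?thesis using assms by (simp add: ennreal_top_divide ennreal_top_mult)
qed

lemma final_arith:
  fixes c M xX ha la C l :: real and Y Q :: ennreal
  assumes c: "c > 0" and M: "M \<ge> 0" and x: "xX \<ge> 0" and ha: "ha > 0" and la: "la > 0" and l: "l > 0"
    and C: "C = 2 * c * l * (1 + M) * (1 + xX)"
    and Q: "Q \<le> ennreal (4 * c^3) * (ennreal ha ^ 3 * ennreal xX ^ 3 + ennreal (M^3) * (ennreal la ^ 3 * Y ^ 3))"
  shows "enn_cbrt Q \<le> ennreal C * ennreal (1 / l) * (ennreal la * Y + ennreal ha)"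
proof (cases Y)
  case top
  have "C > 0" using C c l M x by (simp add: zero_less_mult_iff add_pos_nonneg)
  then show ?thesis using top la l by (simp add: ennreal_mult_top ennreal_top_mult)
next
  case (real y)
  note y = real
  define a where "a = ha * xX"
  define b where "b = la * y"
  have a0: "a \<ge> 0" "b \<ge> 0" using ha x la y by (auto simp: a_def b_def)
  define Z where "Z = (1 + M) * (1 + xX) * (b + ha)"
  have Za: "a \<le> Z"
  proof -
    have "a \<le> (1 + xX) * (b + ha)" using a0 ha x by (simp add: a_def algebra_simps)
    also have "\<dots> \<le> (1 + M) * ((1 + xX) * (b + ha))" using mult_right_mono[of 1 "1+M" "(1 + xX) * (b + ha)"] M a0 ha x by simp
    finally show ?thesis by (simp add: Z_def mult.assoc)
  qed
  have Zb: "M * b \<le> Z"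
  proof -
    have "b \<le> (1 + xX) * (b + ha)" using a0 ha x by (simp add: algebra_simps mult_nonneg_nonneg)
    then have "M * b \<le> M * ((1 + xX) * (b + ha))" using M by (rule mult_left_mono)
    also have "\<dots> \<le> (1 + M) * ((1 + xX) * (b + ha))" using a0 ha x by (intro mult_right_mono) (auto simp: mult_nonneg_nonneg)
    finally show ?thesis by (simp add: Z_def mult.assoc)
  qed
  have "a^3 \<le> Z^3" using Za a0 by (intro power_mono) auto
  moreover have "(M*b)^3 \<le> Z^3" using Zb a0 M by (intro power_mono) auto
  ultimately have key: "4 * c^3 * (a^3 + M^3 * b^3) \<le> (2 * c * Z)^3"
    using c by (simp add: power_mult_distrib)
  define R where "R = C * (1 / l) * (la * y + ha)"
  have R: "R = 2 * c * Z" using l by (simp add: R_def C Z_def b_def field_simps)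
  have R0: "R \<ge> 0" using R c Za a0 by simp
  have "Q \<le> ennreal (4 * c^3 * (a^3 + M^3 * b^3))"
    using Q y a0 ha x la M c
    by (simp add: a_def b_def ennreal_power ennreal_mult'[symmetric] ennreal_plus[symmetric] power_mult_distrib mult_nonneg_nonneg del: ennreal_plus)
  also have "\<dots> \<le> ennreal (R^3)" using key R by (intro ennreal_leI) simp
  also have "\<dots> = ennreal R ^ 3" using R0 by (simp add: ennreal_power)
  finally have "enn_cbrt Q \<le> ennreal R" by (rule enn_cbrt_le)
  also have "ennreal R = ennreal C * ennreal (1 / l) * (ennreal la * Y + ennreal ha)"
    using y la ha l R0 C c M x
    by (simp add: R_def ennreal_mult'[symmetric] ennreal_plus[symmetric] mult_nonneg_nonneg del: ennreal_plus)
  finally show ?thesis .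
qed


lemma nn_integral_cmult_le:
  fixes r :: real assumes r: "r \<ge> 0"
  shows "(\<integral>\<^sup>+x. ennreal r * f x \<partial>M) \<le> ennreal r * integral\<^sup>N M f"
proof (cases "r = 0")
  case True then show ?thesis by simp
next
  case False
  then have r0: "r > 0" using r by simp
  show ?thesis
    unfolding nn_integral_def[of M "\<lambda>x. ennreal r * f x"]
  proof (rule SUP_least)
    fix g assume "g \<in> {g. simple_function M g \<and> g \<le> (\<lambda>x. ennreal r * f x)}"
    then have g: "simple_function M g" "\<And>x. g x \<le> ennreal r * f x" by (auto simp: le_fun_def)
    define g' where "g' x = ennreal (1 / r) * g x" for x
    have sg': "simple_function M g'" unfolding g'_def[abs_def] using g(1) by auto
    have inv: "ennreal r * ennreal (1 / r) = 1" using r0 by (simp add: ennreal_mult'[symmetric])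
    have gg: "g x = ennreal r * g' x" for x unfolding g'_def by (simp add: mult.assoc[symmetric] inv)
    have "g' x \<le> f x" for x
    proof -
      have "g' x \<le> ennreal (1 / r) * (ennreal r * f x)" unfolding g'_def using g(2)[of x] by (rule mult_left_mono) simp
      also have "\<dots> = f x" using inv by (simp add: mult.assoc[symmetric] mult.commute)
      finally show ?thesis .
    qed
    then have "integral\<^sup>N M g' \<le> integral\<^sup>N M f" by (intro nn_integral_mono)
    then have "integral\<^sup>S M g' \<le> integral\<^sup>N M f" using nn_integral_eq_simple_integral[OF sg'] by simp
    moreover have "integral\<^sup>S M g = ennreal r * integral\<^sup>S M g'"
      using simple_integral_mult[OF sg', of "ennreal r"] gg by (simp add: gg[abs_def])
    ultimately show "integral\<^sup>S M g \<le> ennreal r * integral\<^sup>N M f" by (simp add: mult_left_mono)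
  qed
qed



lemma nn_lin3:
  fixes f g :: "'a \<Rightarrow> ennreal"
  assumes [measurable]: "f \<in> borel_measurable M" "g \<in> borel_measurable M"
  shows "(\<integral>\<^sup>+x. a * (f x + b * g x) \<partial>M) = a * (integral\<^sup>N M f + b * integral\<^sup>N M g)"
proof -
  have "(\<integral>\<^sup>+x. a * (f x + b * g x) \<partial>M) = a * (\<integral>\<^sup>+x. (f x + b * g x) \<partial>M)"
    by (rule nn_integral_cmult) measurable
  also have "(\<integral>\<^sup>+x. (f x + b * g x) \<partial>M) = integral\<^sup>N M f + (\<integral>\<^sup>+x. b * g x \<partial>M)"
    by (rule nn_integral_add) measurable
  also have "(\<integral>\<^sup>+x. b * g x \<partial>M) = b * integral\<^sup>N M g"
    by (rule nn_integral_cmult) measurable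
  finally show ?thesis .
qed

theorem lemma3p2:
  fixes \<Omega> :: "(real^3) set" and T \<alpha> h0 C\<eta> :: real
    and w :: "real^3 \<Rightarrow> real \<Rightarrow> real^3"
    and \<eta> :: "real \<Rightarrow> real \<Rightarrow> real \<Rightarrow> real"
    and \<phi> :: "real^3 \<Rightarrow> real"
  assumes dom: "C2_domain \<Omega>"
    and T: "T > 0"
    and \<alpha>: "0 < \<alpha>" "\<alpha> < 1"
    and h0: "h0 > 0"
    and h0_unique: "\<forall>x\<in>layer \<Omega> h0. \<exists>!y. y \<in> frontier \<Omega> \<and> dist x y = dist_bd \<Omega> x"
    and h0_C1: "\<exists>G. continuous_on (closure (layer \<Omega> h0)) G \<and>
                 (\<forall>x\<in>layer \<Omega> h0. GDERIV (dist_bd \<Omega>) x :> G x)"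
    and h0_grad: "\<forall>x\<in>layer \<Omega> h0.
                 GDERIV (dist_bd \<Omega>) x :> - outward_normal \<Omega> (nearest_bd \<Omega> x)"
    and w_meas: "(\<lambda>p. w (fst p) (snd p)) \<in> borel_measurable (lborel \<Otimes>\<^sub>M lborel)"
    and w_besov: "\<forall>\<Omega>'. open \<Omega>' \<and> compact (closure \<Omega>') \<and> closure \<Omega>' \<subseteq> \<Omega> \<longrightarrow>
                 L3_time T (\<lambda>t. besov_norm \<alpha> \<Omega>' (\<lambda>x. w x t)) < top"
    and w_normal: "L3_time T (\<lambda>t. SUP h \<in> {0<..}.
                 L3_norm (layer \<Omega> h) (\<lambda>x. w x t \<bullet> outward_normal \<Omega> (nearest_bd \<Omega> x))
                   / ennreal (h powr \<alpha>)) < top"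
    and \<eta>_smooth: "\<forall>h l. 0 < l \<and> l < h \<longrightarrow> smooth_real (\<eta> h l)"
    and \<eta>_zero: "\<forall>h l s. 0 < l \<and> l < h \<and> s \<le> h - l \<longrightarrow> \<eta> h l s = 0"
    and \<eta>_one: "\<forall>h l s. 0 < l \<and> l < h \<and> h \<le> s \<longrightarrow> \<eta> h l s = 1"
    and \<eta>_deriv: "\<forall>h l s. 0 < l \<and> l < h \<longrightarrow> \<bar>deriv (\<eta> h l) s\<bar> \<le> C\<eta> / l"
    and \<phi>_smooth: "smooth_fun \<phi>"
    and \<phi>_nonneg: "\<forall>x. \<phi> x \<ge> 0"
    and \<phi>_radial: "\<forall>x y. norm x = norm y \<longrightarrow> \<phi> x = \<phi> y"
    and \<phi>_supp: "\<forall>x. norm x > 1 \<longrightarrow> \<phi> x = 0"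
    and \<phi>_int: "(\<phi> has_integral 1) UNIV"
  shows "\<exists>C::real. \<forall>h. 0 < h \<and> h < h0 \<longrightarrow>
     (let l = h / 16 in
       L3_time T (\<lambda>t. L3_norm (layer \<Omega> h - layer \<Omega> (h - l))
          (\<lambda>x. mollify \<phi> l w x t \<bullet> grad (\<lambda>y. \<eta> h l (dist_bd \<Omega> y)) x))
       \<le> ennreal C * ennreal (1 / l) *
           (ennreal (l powr \<alpha>) * L3_time T (\<lambda>t. besov_norm \<alpha> (inner_part \<Omega> (h / 2)) (\<lambda>x. w x t))
            + ennreal (h powr \<alpha>)))"
proof -
  define d where "d = dist_bd \<Omega>"
  define \<nu> where "\<nu> x = outward_normal \<Omega> (nearest_bd \<Omega> x)" for x
  have \<Omega>open: "open \<Omega>" and \<Omega>bdd: "bounded \<Omega>" using dom by (auto simp: C2_domain_def)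
  have dcont: "continuous_on UNIV d"
    unfolding d_def dist_bd_def[abs_def] by (intro continuous_on_infdist continuous_on_id)
  have layer_eq: "layer \<Omega> e = \<Omega> \<inter> {x. d x < e}" for e by (auto simp: layer_def d_def)
  have layer_open: "open (layer \<Omega> e)" for e
    unfolding layer_eq using dcont \<Omega>open by (intro open_Int open_Collect_less) (auto intro: continuous_on_const)
  obtain G where Gc: "continuous_on (closure (layer \<Omega> h0)) G"
      and Gd: "\<forall>x\<in>layer \<Omega> h0. GDERIV (dist_bd \<Omega>) x :> G x" using h0_C1 by blast
  have \<nu>G: "\<nu> x = - G x" if "x \<in> layer \<Omega> h0" for x
    using gderiv_unique[OF h0_grad[rule_format, OF that] Gd[rule_format, OF that]] by (simp add: \<nu>_def) (metis minus_minus)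
  have cpt: "compact (closure (layer \<Omega> h0))"
  proof -
    have "layer \<Omega> h0 \<subseteq> \<Omega>" by (auto simp: layer_def)
    then have "bounded (layer \<Omega> h0)" using \<Omega>bdd by (rule bounded_subset[rotated])
    then show ?thesis by (simp add: compact_closure)
  qed
  obtain M0 where M0: "\<forall>y\<in>G ` closure (layer \<Omega> h0). norm y \<le> M0"
    using compact_imp_bounded[OF compact_continuous_image[OF Gc cpt]] unfolding bounded_iff by blast
  define M where "M = max M0 0"
  have M0le: "M \<ge> 0" by (simp add: M_def)
  have \<nu>M: "norm (\<nu> x) \<le> M" if "x \<in> layer \<Omega> h0" for x
    using M0 that closure_subset[of "layer \<Omega> h0"] \<nu>G[OF that] by (force simp: M_def)
  define \<nu>m where "\<nu>m x = - (indicator (layer \<Omega> h0) x *\<^sub>R G x)" for x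
  have \<nu>m_meas[measurable]: "\<nu>m \<in> borel_measurable borel"
  proof -
    have "(\<lambda>x. indicator (layer \<Omega> h0) x *\<^sub>R G x) \<in> borel_measurable borel"
      by (rule borel_measurable_continuous_on_indicator)
         (use layer_open continuous_on_subset[OF Gc closure_subset] in auto)
    then show ?thesis unfolding \<nu>m_def[abs_def] by measurable
  qed
  have \<nu>meq: "\<nu>m x = \<nu> x" if "x \<in> layer \<Omega> h0" for x
    using that \<nu>G[OF that] by (simp add: \<nu>m_def)
  have C\<eta>0: "C\<eta> \<ge> 0"
    using \<eta>_deriv[rule_format, of 1 2 0] by simp
  define c0 where "c0 = C\<eta> + 1"
  have c0pos: "c0 > 0" using C\<eta>0 by (simp add: c0_def)
  define S where "S t = (SUP h\<in>{0<..}. L3_norm (layer \<Omega> h) (\<lambda>x. w x t \<bullet> \<nu> x) / ennreal (h powr \<alpha>))" for t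
  have "L3_time T S < top" using w_normal by (simp add: S_def[abs_def] \<nu>_def[abs_def])
  then obtain xX where X: "L3_time T S = ennreal xX" and xX0: "xX \<ge> 0"
    by (metis ennreal_cases less_irrefl ennreal_less_zero_iff not_le zero_le)
  have \<phi>cont: "continuous_on UNIV \<phi>"
    using \<phi>_smooth unfolding smooth_fun_def by (metis foldr.simps(1) id_apply)
  have wm[measurable (raw)]: "f \<in> N \<rightarrow>\<^sub>M borel \<Longrightarrow> g \<in> N \<rightarrow>\<^sub>M borel \<Longrightarrow> (\<lambda>z. w (f z) (g z)) \<in> borel_measurable N"
    for f :: "'z \<Rightarrow> real^3" and g :: "'z \<Rightarrow> real" and N
    using measurable_compose[OF measurable_Pair[of f N lborel g lborel] w_meas]
    by (simp add: measurable_lborel1)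
  define C where "C = 2 * c0 * (1 + M) * (1 + xX)"
  show ?thesis
  proof (rule exI[of _ C], intro allI impI)
    fix h assume hh: "0 < h \<and> h < h0"
    define l where "l = h / 16"
    have l0: "l > 0" "l < h" "h = 16 * l" using hh by (auto simp: l_def)
    define A where "A = layer \<Omega> h - layer \<Omega> (h - l)"
    define D where "D = inner_part \<Omega> (h / 2)"
    define \<phi>l where "\<phi>l = mollifier_scaled \<phi> l"
    have pn: "\<And>x. \<phi> x \<ge> 0" using \<phi>_nonneg by blast
    have ps: "\<And>x. norm x > 1 \<Longrightarrow> \<phi> x = 0" using \<phi>_supp by blast
    note mf = moll_facts[OF l0(1) \<phi>cont pn ps \<phi>_int, folded \<phi>l_def]
    have \<phi>l_meas[measurable]: "\<phi>l \<in> borel_measurable borel" using mf(1) .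
    have A_meas[measurable]: "A \<in> sets borel" unfolding A_def using layer_open by auto
    have cball_meas[measurable]: "cball (0::real^3) l \<in> sets borel" by auto
    have Aprops: "x \<in> \<Omega> \<and> h - l \<le> d x \<and> d x < h \<and> x \<in> layer \<Omega> h0 \<and> x \<in> layer \<Omega> h" if "x \<in> A" for x
      using that hh by (auto simp: A_def layer_def d_def)
    have gradA: "grad (\<lambda>y. \<eta> h l (dist_bd \<Omega> y)) x = deriv (\<eta> h l) (d x) *\<^sub>R (- \<nu> x)" if "x \<in> A" for x
    proof -
      have "smooth_real (\<eta> h l)" using \<eta>_smooth l0 by auto
      then have "(deriv ^^ 0) (\<eta> h l) differentiable_on UNIV" unfolding smooth_real_def by blast
      then have "\<eta> h l differentiable (at (dist_bd \<Omega> x))" by (simp add: differentiable_on_def)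
      then have "DERIV (\<eta> h l) (dist_bd \<Omega> x) :> deriv (\<eta> h l) (dist_bd \<Omega> x)"
        by (simp add: DERIV_deriv_iff_real_differentiable)
      from GDERIV_DERIV_compose[OF h0_grad[rule_format, of x] this]
      show ?thesis using Aprops[OF that] by (intro grad_eq) (simp add: \<nu>_def d_def)
    qed
    have derivb: "\<bar>deriv (\<eta> h l) s\<bar> \<le> c0 / l" for s
      using \<eta>_deriv[rule_format, of l h s] l0 by (simp add: c0_def divide_right_mono) (smt (verit) divide_right_mono l0(1))
    define F where "F x t = mollify \<phi> l w x t \<bullet> grad (\<lambda>y. \<eta> h l (dist_bd \<Omega> y)) x" for x t
    define P where "P x t = (\<integral>\<^sup>+y. ennreal (indicator (cball 0 l) y * \<phi>l y * norm (w (x - y) t - w x t) ^ 3) \<partial>lborel)" for x t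
    have jen: "ennreal (norm (mollify \<phi> l w x t - w x t) ^ 3) \<le> P x t" for x t
      unfolding mollify_def P_def \<phi>l_def[symmetric]
      by (rule moll_jensen[where u="\<lambda>y. w (x - y) t"]) (use mf in auto)
    define K where "K = 4 * (c0 / l) ^ 3"
    have pt: "ennreal (norm (F x t) ^ 3) \<le> ennreal K * (ennreal (norm (w x t \<bullet> \<nu>m x) ^ 3) + ennreal (M ^ 3) * P x t)"
      if "x \<in> A" for x t
    proof -
      define m where "m = mollify \<phi> l w x t"
      define a where "a = norm (w x t \<bullet> \<nu>m x)"
      define b where "b = norm (m - w x t)"
      have ab0: "a \<ge> 0" "b \<ge> 0" by (auto simp: a_def b_def)
      have lx: "x \<in> layer \<Omega> h0" using Aprops[OF that] by simp
      have "\<bar>m \<bullet> \<nu> x\<bar> = \<bar>w x t \<bullet> \<nu> x + (m - w x t) \<bullet> \<nu> x\<bar>" by (simp add: inner_diff_left)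
      also have "\<dots> \<le> a + b * M"
      proof -
        have "\<bar>(m - w x t) \<bullet> \<nu> x\<bar> \<le> b * norm (\<nu> x)" unfolding b_def by (rule Cauchy_Schwarz_ineq2)
        also have "\<dots> \<le> b * M" using \<nu>M[OF lx] ab0 by (intro mult_left_mono) auto
        finally show ?thesis using \<nu>meq[OF lx] by (simp add: a_def)
      qed
      finally have mn: "\<bar>m \<bullet> \<nu> x\<bar> \<le> a + b * M" .
      have "norm (F x t) = \<bar>deriv (\<eta> h l) (d x)\<bar> * \<bar>m \<bullet> \<nu> x\<bar>"
        by (simp add: F_def gradA[OF that] m_def abs_mult)
      also have "\<dots> \<le> (c0 / l) * (a + b * M)"
        using derivb mn c0pos l0 by (intro mult_mono) auto
      finally have Fb: "norm (F x t) \<le> (c0 / l) * (a + b * M)" .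
      have "norm (F x t) ^ 3 \<le> ((c0 / l) * (a + b * M)) ^ 3" using Fb by (intro power_mono) auto
      also have "\<dots> = (c0 / l) ^ 3 * (a + b * M) ^ 3" by (rule power_mult_distrib)
      also have "\<dots> \<le> (c0 / l) ^ 3 * (4 * (a ^ 3 + M ^ 3 * b ^ 3))"
      proof (intro mult_left_mono)
        have "4 * (a ^ 3 + (b*M) ^ 3) - (a + b * M) ^ 3 = 3 * (a + b*M) * (a - b*M)^2"
          by (simp add: power2_eq_square power3_eq_cube algebra_simps)
        also have "\<dots> \<ge> 0" using ab0 M0le by simp
        finally show "(a + b * M) ^ 3 \<le> 4 * (a ^ 3 + M ^ 3 * b ^ 3)" by (simp add: power_mult_distrib mult.commute)
      qed (use c0pos l0 in simp)
      finally have r: "norm (F x t) ^ 3 \<le> K * (a ^ 3 + M ^ 3 * b ^ 3)" by (simp add: K_def algebra_simps)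
      have K0: "K \<ge> 0" using c0pos l0 by (simp add: K_def)
      have "ennreal (norm (F x t) ^ 3) \<le> ennreal (K * (a ^ 3 + M ^ 3 * b ^ 3))" using r by (rule ennreal_leI)
      also have "\<dots> = ennreal K * (ennreal (a ^ 3) + ennreal (M ^ 3) * ennreal (b ^ 3))"
      proof -
        have e1: "ennreal (M^3*b^3) = ennreal (M^3) * ennreal (b^3)" using ab0 M0le by (intro ennreal_mult) auto
        have e2: "ennreal (a^3 + M^3*b^3) = ennreal (a^3) + ennreal (M^3*b^3)" using ab0 M0le by (intro ennreal_plus) auto
        have e3: "ennreal (K * (a^3 + M^3*b^3)) = ennreal K * ennreal (a^3 + M^3*b^3)" using K0 ab0 M0le by (intro ennreal_mult) auto
        show ?thesis unfolding e3 e2 e1 ..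
      qed
      also have "\<dots> \<le> ennreal K * (ennreal (a ^ 3) + ennreal (M ^ 3) * P x t)"
        using jen[of x t] by (intro mult_left_mono add_left_mono) (auto simp: b_def m_def)
      finally show ?thesis by (simp add: a_def)
    qed
    define I1 where "I1 t = (\<integral>\<^sup>+x. ennreal (norm (w x t \<bullet> \<nu>m x) ^ 3) * indicator A x \<partial>lborel)" for t
    define J where "J t = (\<integral>\<^sup>+x. P x t * indicator A x \<partial>lborel)" for t
    define N where "N t = L3_norm A (\<lambda>x. F x t)" for t
    have Nt: "N t ^ 3 \<le> ennreal K * (I1 t + ennreal (M ^ 3) * J t)" for t
    proof -
      have "N t ^ 3 = (\<integral>\<^sup>+x. ennreal (norm (F x t) ^ 3) * indicator A x \<partial>lborel)"
        by (simp add: N_def L3_norm_def enn_cbrt_cube)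
      also have "\<dots> \<le> (\<integral>\<^sup>+x. ennreal K * (ennreal (norm (w x t \<bullet> \<nu>m x) ^ 3) * indicator A x + ennreal (M ^ 3) * (P x t * indicator A x)) \<partial>lborel)"
      proof (rule nn_integral_mono)
        fix x show "ennreal (norm (F x t) ^ 3) * indicator A x \<le> ennreal K * (ennreal (norm (w x t \<bullet> \<nu>m x) ^ 3) * indicator A x + ennreal (M ^ 3) * (P x t * indicator A x))"
          using pt[of x t] by (cases "x \<in> A") (simp_all add: indicator_def)
      qed
      also have "\<dots> = ennreal K * (I1 t + ennreal (M ^ 3) * J t)"
      proof -
        have m1: "(\<lambda>x. ennreal (norm (w x t \<bullet> \<nu>m x) ^ 3) * indicator A x) \<in> borel_measurable lborel" by measurable
        have m2: "(\<lambda>x. P x t * indicator A x) \<in> borel_measurable lborel" unfolding P_def by measurable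
        show ?thesis unfolding I1_def J_def by (rule nn_lin3[OF m1 m2])
      qed
      finally show ?thesis .
    qed
    define B where "B t = besov_norm \<alpha> D (\<lambda>x. w x t)" for t
    have inD: "x \<in> D \<and> x - y \<in> D" if "x \<in> A" "norm y \<le> l" for x y
    proof -
      have clo: "closure (layer \<Omega> (h/2)) \<subseteq> {z. d z \<le> h/2}"
      proof (rule closure_minimal)
        show "closed {z. d z \<le> h/2}" by (rule closed_Collect_le[OF dcont continuous_on_const])
      qed (auto simp: layer_eq)
      note ap = Aprops[OF that(1)]
      have "x \<in> D" using ap clo l0 unfolding D_def inner_part_def by force
      moreover have "x - y \<in> \<Omega>"
        using in_by_infdist[OF \<Omega>open, of x "x - y"] ap that(2) l0 by (simp add: d_def dist_bd_def dist_norm)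
      moreover have "d (x - y) > h/2"
        using infdist_triangle[of x "frontier \<Omega>" "x - y"] ap that(2) l0 by (simp add: d_def dist_bd_def dist_norm)
      ultimately show ?thesis using clo unfolding D_def inner_part_def by force
    qed
    have ybound: "(\<integral>\<^sup>+x. ennreal (norm (w (x - y) t - w x t) ^ 3) * indicator A x \<partial>lborel) \<le> ennreal (l powr \<alpha>) ^ 3 * B t ^ 3"
      if "norm y \<le> l" for y t
    proof (cases "y = 0")
      case True then show ?thesis by simp
    next
      case False
      define E where "E = D \<inter> (\<lambda>z. z + y) ` D"
      define L where "L = L3_norm E (\<lambda>x. w x t - w (x - y) t)"
      have "(\<integral>\<^sup>+x. ennreal (norm (w (x - y) t - w x t) ^ 3) * indicator A x \<partial>lborel)
          \<le> (\<integral>\<^sup>+x. ennreal (norm (w x t - w (x - y) t) ^ 3) * indicator E x \<partial>lborel)"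
      proof (rule nn_integral_mono)
        fix x
        show "ennreal (norm (w (x - y) t - w x t) ^ 3) * indicator A x \<le> ennreal (norm (w x t - w (x - y) t) ^ 3) * indicator E x"
        proof (cases "x \<in> A")
          case True
          then have "x \<in> E" using inD[OF True that] unfolding E_def by (auto intro!: image_eqI[of x _ "x - y"])
          then show ?thesis using True by (simp add: norm_minus_commute)
        qed simp
      qed
      also have "\<dots> = L ^ 3" by (simp add: L_def L3_norm_def enn_cbrt_cube)
      also have "\<dots> \<le> (ennreal (norm y powr \<alpha>) * B t) ^ 3"
      proof (rule power_mono_ennreal)
        have "ennreal (norm y powr (- \<alpha>)) * L \<le> (SUP y \<in> {y. y \<noteq> 0}. ennreal (norm y powr (- \<alpha>)) *
              L3_norm (D \<inter> ((\<lambda>z. z + y) ` D)) (\<lambda>x. w x t - w (x - y) t))"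
          unfolding L_def E_def by (rule SUP_upper[where f="\<lambda>y. ennreal (norm y powr (- \<alpha>)) *
              L3_norm (D \<inter> ((\<lambda>z. z + y) ` D)) (\<lambda>x. w x t - w (x - y) t)"]) (use False in simp)
        also have "\<dots> \<le> B t" unfolding B_def besov_norm_def by (rule add_increasing) auto
        finally have "ennreal (norm y powr \<alpha>) * (ennreal (norm y powr (- \<alpha>)) * L) \<le> ennreal (norm y powr \<alpha>) * B t"
          by (rule mult_left_mono) simp
        moreover have "ennreal (norm y powr \<alpha>) * (ennreal (norm y powr (- \<alpha>)) * L) = L"
        proof -
          have "norm y powr \<alpha> * norm y powr (- \<alpha>) = 1" using False by (simp add: powr_add[symmetric])
          then show ?thesis by (simp add: mult.assoc[symmetric] ennreal_mult'[symmetric])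
        qed
        ultimately show "L \<le> ennreal (norm y powr \<alpha>) * B t" by simp
      qed
      also have "\<dots> \<le> (ennreal (l powr \<alpha>) * B t) ^ 3"
        using that \<alpha> by (intro power_mono_ennreal mult_right_mono ennreal_leI powr_mono2) auto
      also have "\<dots> = ennreal (l powr \<alpha>) ^ 3 * B t ^ 3" by (simp add: power_mult_distrib)
      finally show ?thesis .
    qed
    have Jb: "J t \<le> ennreal (l powr \<alpha>) ^ 3 * B t ^ 3" for t
    proof -
      define R where "R = ennreal (l powr \<alpha>) ^ 3 * B t ^ 3"
      have "J t = (\<integral>\<^sup>+x. \<integral>\<^sup>+y. ennreal (indicator (cball 0 l) y * \<phi>l y * norm (w (x - y) t - w x t) ^ 3) * indicator A x \<partial>lborel \<partial>lborel)"
        unfolding J_def P_def by (rule nn_integral_cong, rule nn_integral_multc[symmetric]) measurable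
      also have "\<dots> = (\<integral>\<^sup>+y. \<integral>\<^sup>+x. ennreal (indicator (cball 0 l) y * \<phi>l y * norm (w (x - y) t - w x t) ^ 3) * indicator A x \<partial>lborel \<partial>lborel)"
        by (rule lborel_pair.Fubini'[symmetric]) measurable
      also have "\<dots> \<le> (\<integral>\<^sup>+y. ennreal (indicator (cball 0 l) y * \<phi>l y) * R \<partial>lborel)"
      proof (rule nn_integral_mono)
        fix y :: "real^3"
        show "(\<integral>\<^sup>+x. ennreal (indicator (cball 0 l) y * \<phi>l y * norm (w (x - y) t - w x t) ^ 3) * indicator A x \<partial>lborel)
              \<le> ennreal (indicator (cball 0 l) y * \<phi>l y) * R"
        proof (cases "y \<in> cball 0 l")
          case True
          have "(\<integral>\<^sup>+x. ennreal (indicator (cball 0 l) y * \<phi>l y * norm (w (x - y) t - w x t) ^ 3) * indicator A x \<partial>lborel)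
              = (\<integral>\<^sup>+x. ennreal (\<phi>l y) * (ennreal (norm (w (x - y) t - w x t) ^ 3) * indicator A x) \<partial>lborel)"
            using True mf(2)[of y] by (intro nn_integral_cong) (simp add: ennreal_mult mult.assoc)
          also have "\<dots> = ennreal (\<phi>l y) * (\<integral>\<^sup>+x. ennreal (norm (w (x - y) t - w x t) ^ 3) * indicator A x \<partial>lborel)"
            by (rule nn_integral_cmult) measurable
          also have "\<dots> \<le> ennreal (\<phi>l y) * R"
            unfolding R_def using True by (intro mult_left_mono ybound) auto
          finally show ?thesis using True by simp
        qed simp
      qed
      also have "\<dots> = (\<integral>\<^sup>+y. ennreal (indicator (cball 0 l) y * \<phi>l y) \<partial>lborel) * R"
        by (rule nn_integral_multc) measurable
      also have "\<dots> = R" using mf(4) by simp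
      finally show ?thesis by (simp add: R_def)
    qed
    have I1b: "I1 t \<le> ennreal (h powr \<alpha>) ^ 3 * S t ^ 3" for t
    proof -
      define L where "L = L3_norm (layer \<Omega> h) (\<lambda>x. w x t \<bullet> \<nu> x)"
      have "I1 t \<le> (\<integral>\<^sup>+x. ennreal (norm (w x t \<bullet> \<nu> x) ^ 3) * indicator (layer \<Omega> h) x \<partial>lborel)"
        unfolding I1_def
      proof (rule nn_integral_mono)
        fix x show "ennreal (norm (w x t \<bullet> \<nu>m x) ^ 3) * indicator A x \<le> ennreal (norm (w x t \<bullet> \<nu> x) ^ 3) * indicator (layer \<Omega> h) x"
          using Aprops[of x] \<nu>meq[of x] by (cases "x \<in> A") auto
      qed
      also have "\<dots> = L ^ 3" by (simp add: L_def L3_norm_def enn_cbrt_cube)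
      also have "\<dots> \<le> (S t * ennreal (h powr \<alpha>)) ^ 3"
      proof (rule power_mono_ennreal)
        have "L \<le> (L / ennreal (h powr \<alpha>)) * ennreal (h powr \<alpha>)" using hh by (intro ennreal_div_mult_ge) simp
        also have "\<dots> \<le> S t * ennreal (h powr \<alpha>)"
          unfolding S_def L_def using hh by (intro mult_right_mono SUP_upper) auto
        finally show "L \<le> S t * ennreal (h powr \<alpha>)" .
      qed
      also have "\<dots> = ennreal (h powr \<alpha>) ^ 3 * S t ^ 3" by (simp add: power_mult_distrib mult.commute)
      finally show ?thesis .
    qed
    have I1m[measurable]: "I1 \<in> borel_measurable lborel" unfolding I1_def[abs_def] by measurable
    have Jm[measurable]: "J \<in> borel_measurable lborel" unfolding J_def[abs_def] P_def by measurable
    define Y where "Y = L3_time T B"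
    have "(\<integral>\<^sup>+t. N t ^ 3 * indicator {0..<T} t \<partial>lborel) \<le> (\<integral>\<^sup>+t. ennreal K * (I1 t * indicator {0..<T} t + ennreal (M ^ 3) * (J t * indicator {0..<T} t)) \<partial>lborel)"
      by (rule nn_integral_mono) (auto simp: indicator_def Nt)
    also have "\<dots> = ennreal K * ((\<integral>\<^sup>+t. I1 t * indicator {0..<T} t \<partial>lborel) + ennreal (M ^ 3) * (\<integral>\<^sup>+t. J t * indicator {0..<T} t \<partial>lborel))"
    proof -
      have m1: "(\<lambda>t. I1 t * indicator {0..<T} t) \<in> borel_measurable lborel" by measurable
      have m2: "(\<lambda>t. J t * indicator {0..<T} t) \<in> borel_measurable lborel" by measurable
      show ?thesis by (rule nn_lin3[OF m1 m2])
    qed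
    also have "\<dots> \<le> ennreal K * ((\<integral>\<^sup>+t. ennreal (h powr \<alpha>) ^ 3 * (S t ^ 3 * indicator {0..<T} t) \<partial>lborel)
         + ennreal (M ^ 3) * (\<integral>\<^sup>+t. ennreal (l powr \<alpha>) ^ 3 * (B t ^ 3 * indicator {0..<T} t) \<partial>lborel))"
      apply (intro mult_left_mono add_mono nn_integral_mono)
      using I1b Jb by (auto simp: indicator_def)
    also have "\<dots> \<le> ennreal K * (ennreal (h powr \<alpha>) ^ 3 * ennreal xX ^ 3 + ennreal (M ^ 3) * (ennreal (l powr \<alpha>) ^ 3 * Y ^ 3))"
    proof -
      have X3: "(\<integral>\<^sup>+t. S t ^ 3 * indicator {0..<T} t \<partial>lborel) = ennreal xX ^ 3"
        using X enn_cbrt_cube unfolding L3_time_def by metis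
      have Y3: "(\<integral>\<^sup>+t. B t ^ 3 * indicator {0..<T} t \<partial>lborel) = Y ^ 3"
        by (simp add: Y_def L3_time_def enn_cbrt_cube)
      have hS: "(\<integral>\<^sup>+t. ennreal (h powr \<alpha>) ^ 3 * (S t ^ 3 * indicator {0..<T} t) \<partial>lborel) \<le> ennreal (h powr \<alpha>) ^ 3 * ennreal xX ^ 3"
        using nn_integral_cmult_le[where r="(h powr \<alpha>)^3" and f="\<lambda>t. S t ^ 3 * indicator {0..<T} t" and M=lborel] X3
        by (simp add: ennreal_power)
      have lB: "(\<integral>\<^sup>+t. ennreal (l powr \<alpha>) ^ 3 * (B t ^ 3 * indicator {0..<T} t) \<partial>lborel) \<le> ennreal (l powr \<alpha>) ^ 3 * Y ^ 3"
        using nn_integral_cmult_le[where r="(l powr \<alpha>)^3" and f="\<lambda>t. B t ^ 3 * indicator {0..<T} t" and M=lborel] Y3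
        by (simp add: ennreal_power)
      show ?thesis using hS lB by (intro mult_left_mono add_mono) auto
    qed
    finally have Q: "(\<integral>\<^sup>+t. N t ^ 3 * indicator {0..<T} t \<partial>lborel) \<le> ennreal (4 * (c0 / l) ^ 3) * (ennreal (h powr \<alpha>) ^ 3 * ennreal xX ^ 3 + ennreal (M ^ 3) * (ennreal (l powr \<alpha>) ^ 3 * Y ^ 3))"
      by (simp add: K_def)
    have fin: "L3_time T N \<le> ennreal C * ennreal (1 / l) * (ennreal (l powr \<alpha>) * Y + ennreal (h powr \<alpha>))"
      unfolding L3_time_def[of T N]
      by (rule final_arith[where c="c0/l" and M=M and xX=xX, OF _ M0le xX0 _ _ l0(1) _ Q]) (use c0pos l0 hh in \<open>auto simp: C_def\<close>)
    have eqN: "(\<lambda>t. L3_norm (layer \<Omega> h - layer \<Omega> (h - l)) (\<lambda>x. mollify \<phi> l w x t \<bullet> grad (\<lambda>y. \<eta> h l (dist_bd \<Omega> y)) x)) = N"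
      by (simp add: N_def F_def A_def fun_eq_iff)
    have eqY: "L3_time T (\<lambda>t. besov_norm \<alpha> (inner_part \<Omega> (h / 2)) (\<lambda>x. w x t)) = Y"
      by (simp add: Y_def B_def[abs_def] D_def)
    show "let l = h / 16 in
       L3_time T (\<lambda>t. L3_norm (layer \<Omega> h - layer \<Omega> (h - l))
          (\<lambda>x. mollify \<phi> l w x t \<bullet> grad (\<lambda>y. \<eta> h l (dist_bd \<Omega> y)) x))
       \<le> ennreal C * ennreal (1 / l) *
           (ennreal (l powr \<alpha>) * L3_time T (\<lambda>t. besov_norm \<alpha> (inner_part \<Omega> (h / 2)) (\<lambda>x. w x t))
            + ennreal (h powr \<alpha>))"
      unfolding Let_def l_def[symmetric] eqN eqY using fin .
  qed
qed

end
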